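(* Let $a<b$ and let $\mu$ be a probability distribution function constant on the complement of $[a,b]$. Let $\theta_1<\cdots<\theta_k$ and $d_1,\dots,d_k$ be the nodes and weights of the $k$-point Gaussian quadrature rule $\mathrm{GQ}_k(\mu)$, and set $\theta_0=a$, $\theta_{k+1}=b$, $d_0=d_{k+1}=0$. Then $$d_{\mathrm{KS}}(\mu,\mathrm{GQ}_k(\mu))\le\max_{j=1,\dots,k}d_j,\qquad d_{\mathrm{W}}(\mu,\mathrm{GQ}_k(\mu))\le\sum_{j=0}^{k}\max\{d_j,d_{j+1}\}(\theta_{j+1}-\theta_j).$$
   Context: For a probability distribution function $\mu$ with finite moments up to degree $2k-1$, the $k$-point Gaussian quadrature rule $\mathrm{GQ}_k(\mu)$ is the distribution function $\sum_{j=1}^k d_j\mathbb{1}[\theta_j\le x]$ with nodes $\theta_j$ and nonnegative weights $d_j$ such that $\int p\,d\mu=\int p\,d\mathrm{GQ}_k(\mu)$ for all polynomials $p$ of degree $\le2k-1$. $d_{\mathrm{KS}}(\mu,\nu)=\sup_x|\mu(x)-\nu(x)|$ and $d_{\mathrm{W}}(\mu,\nu)=\int|\mu(x)-\nu(x)|\,dx$. *)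

theory Defs
  imports "HOL-Analysis.Analysis" "HOL-Computational_Algebra.Polynomial"
begin

definition is_distribution_function :: "(real \<Rightarrow> real) \<Rightarrow> bool" where
  "is_distribution_function F \<longleftrightarrow>
     mono F \<and> (\<forall>x. continuous (at_right x) F) \<and>
     (F \<longlongrightarrow> 0) at_bot \<and> (F \<longlongrightarrow> 1) at_top"

abbreviation ls_measure :: "(real \<Rightarrow> real) \<Rightarrow> real measure" where
  "ls_measure F \<equiv> interval_measure F"

definition quad_df :: "nat \<Rightarrow> (nat \<Rightarrow> real) \<Rightarrow> (nat \<Rightarrow> real) \<Rightarrow> real \<Rightarrow> real" where
  "quad_df k \<theta> d x = (\<Sum>j\<in>{1..k}. d j * (if \<theta> j \<le> x then 1 else 0))"

definition is_GQ :: "nat \<Rightarrow> (real \<Rightarrow> real) \<Rightarrow> (nat \<Rightarrow> real) \<Rightarrow> (nat \<Rightarrow> real) \<Rightarrow> bool" where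
  "is_GQ k \<mu> \<theta> d \<longleftrightarrow>
     (\<forall>i j. 1 \<le> i \<longrightarrow> i < j \<longrightarrow> j \<le> k \<longrightarrow> \<theta> i < \<theta> j) \<and>
     (\<forall>j\<in>{1..k}. 0 \<le> d j) \<and>
     (\<forall>m. m \<le> 2*k - 1 \<longrightarrow> integrable (ls_measure \<mu>) (\<lambda>x. x ^ m)) \<and>
     (\<forall>p :: real poly. degree p \<le> 2*k - 1 \<longrightarrow>
        integral\<^sup>L (ls_measure \<mu>) (poly p) = (\<Sum>j\<in>{1..k}. d j * poly p (\<theta> j)))"

definition d_KS :: "(real \<Rightarrow> real) \<Rightarrow> (real \<Rightarrow> real) \<Rightarrow> real" where
  "d_KS F G = (SUP x. \<bar>F x - G x\<bar>)"

definition d_W :: "(real \<Rightarrow> real) \<Rightarrow> (real \<Rightarrow> real) \<Rightarrow> ennreal" where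
  "d_W F G = (\<integral>\<^sup>+ x. ennreal \<bar>F x - G x\<bar> \<partial>lborel)"

end

theory Submission
  imports Defs "HOL-Computational_Algebra.Computational_Algebra" "HOL-Computational_Algebra.Field_as_Ring"
    "HOL-Probability.Probability"
begin



lemma sq_dvd_root_deriv:
  fixes q :: "real poly"
  assumes "[:-s,1:]^2 dvd q"
  shows "poly q s = 0 \<and> poly (pderiv q) s = 0"
proof -
  obtain r where r: "q = [:-s,1:]^2 * r" using assms by blast
  have "pderiv q = [:-s,1:]^2 * pderiv r + r * pderiv ([:-s,1:]^2)"
    by (simp add: r pderiv_mult)
  moreover have "pderiv ([:-s,1:]^2) = smult 2 [:-s,1:]"
    by (simp add: power2_eq_square pderiv_mult pderiv_pCons)
  ultimately show ?thesis by (simp add: r)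
qed

lemma prod_roots_dvd:
  fixes q :: "real poly"
  assumes "finite Z" "\<forall>z\<in>Z. poly q z = 0"
  shows "(\<Prod>z\<in>Z. [:-z,1:]) dvd q"
  using assms
proof (induction Z rule: finite_induct)
  case empty then show ?case by simp
next
  case (insert z Z)
  then obtain r where r: "q = (\<Prod>z\<in>Z. [:-z,1:]) * r" by auto
  have "poly (\<Prod>z\<in>Z. [:-z,1:]) z \<noteq> 0"
    using insert(1,2) by (auto simp: poly_prod)
  moreover have "poly q z = 0" using insert by auto
  ultimately have "poly r z = 0" by (simp add: r)
  then have "[:-z,1:] dvd r" by (simp add: poly_eq_0_iff_dvd)
  then have "[:-z,1:] * (\<Prod>z\<in>Z. [:-z,1:]) dvd (\<Prod>z\<in>Z. [:-z,1:]) * r"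
    by (metis mult.commute mult_dvd_mono dvd_refl)
  then show ?case using insert(1,2) by (simp add: r)
qed

lemma prod_sign:
  fixes x :: real
  assumes "finite Z"
  shows "(\<Prod>z\<in>Z. x - z) = (-1)^card {z\<in>Z. x < z} * (\<Prod>z\<in>Z. \<bar>x - z\<bar>)"
  using assms
proof (induction Z rule: finite_induct)
  case empty then show ?case by simp
next
  case (insert z Z)
  show ?case
  proof (cases "x < z")
    case True
    have "{w\<in>insert z Z. x < w} = insert z {w\<in>Z. x < w}" using True by auto
    moreover have "card (insert z {w\<in>Z. x < w}) = Suc (card {w\<in>Z. x < w})"
      using insert by simp
    ultimately show ?thesis using insert True by (simp add: algebra_simps)
  next
    case False
    have "{w\<in>insert z Z. x < w} = {w\<in>Z. x < w}" using False by auto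
    then show ?thesis using insert False by simp
  qed
qed

lemma construct:
  fixes t :: "nat \<Rightarrow> real"
  assumes mono: "\<forall>i i'. 1 \<le> i \<longrightarrow> i < i' \<longrightarrow> i' \<le> k \<longrightarrow> t i < t i'"
    and j: "1 \<le> j" "j < k"
  shows "\<exists>p. degree p \<le> 2*k-2 \<and> (\<forall>i\<in>{1..k}. poly p (t i) = (if i \<le> j then 1 else 0))
           \<and> (\<forall>i\<in>{1..k}. i \<noteq> j \<longrightarrow> poly (pderiv p) (t i) = 0)"
proof -
  define A where "A = [:-t j,1:] * (\<Prod>i\<in>{1..<j}. [:-t i,1:]^2)"
  define B where "B = (\<Prod>i\<in>{j<..k}. [:-t i,1:]^2)"
  have Bnz: "poly B s \<noteq> 0" if "s \<in> t ` {1..j}" for s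
  proof -
    from that obtain i where i: "i \<in> {1..j}" "s = t i" by blast
    have "t i' \<noteq> t i" if "i' \<in> {j<..k}" for i'
      using mono i that by (metis atLeastAtMost_iff greaterThanAtMost_iff le_less_trans less_irrefl)
    then have ne2: "\<forall>i'\<in>{j<..k}. (t i - t i')^2 \<noteq> 0" by force
    have "(\<Prod>i'\<in>{j<..k}. (t i - t i')^2) \<noteq> 0"
      by (subst prod_zero_iff) (simp, use ne2 in blast)
    then show ?thesis by (simp add: B_def poly_prod i)
  qed
  have cop1: "coprime [:-s,1:] B" if "s \<in> t ` {1..j}" for s
  proof (rule prime_elem_imp_coprime)
    show "prime_elem [:-s,1:]" by (rule prime_elem_linear_field_poly) simp
    show "\<not> [:-s,1:] dvd B" using Bnz[OF that] by (simp add: poly_eq_0_iff_dvd)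
  qed
  have c1: "coprime [:-t j,1:] B" using cop1 j by auto
  have c2: "coprime (\<Prod>i\<in>{1..<j}. [:-t i,1:]^2) B"
    by (rule prod_coprime_left) (use cop1 in auto)
  have "coprime A B" unfolding A_def using c1 c2 by (simp only: coprime_mult_left_iff)
  then have g: "gcd A B = 1" by (simp add: coprime_iff_gcd_eq_1)
  obtain u v where uv: "u * A + v * B = 1"
    using bezout_coefficients_fst_snd[of A B] g by metis
  define r where "r = (-u) mod B"
  define p where "p = 1 + A * r"
  have B0: "B \<noteq> 0" by (simp add: B_def)
  have degA: "degree A \<le> 2*j - 1"
  proof -
    have "degree (\<Prod>i\<in>{1..<j}. [:-t i,1:]^2) = (\<Sum>i\<in>{1..<j}. degree ([:-t i,1:]^2))"
      by (rule degree_prod_sum_eq) simp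
    also have "\<dots> = 2 * (j - 1)" by (simp add: degree_linear_power)
    finally have "degree (\<Prod>i\<in>{1..<j}. [:-t i,1:]^2) = 2 * (j - 1)" .
    moreover have "degree A = degree [:-t j,1:] + degree (\<Prod>i\<in>{1..<j}. [:-t i,1:]^2)"
      unfolding A_def by (rule degree_mult_eq) simp_all
    ultimately show ?thesis using j by simp
  qed
  have degB: "degree B = 2*(k-j)"
    unfolding B_def by (subst degree_prod_sum_eq) (auto simp: degree_linear_power)
  have degr: "r = 0 \<or> degree r < degree B" unfolding r_def using degree_mod_less[OF B0] by simp
  have degp: "degree p \<le> 2*k-2"
  proof (cases "r = 0")
    case True then show ?thesis by (simp add: p_def)
  next
    case False
    then have "degree r < 2*(k-j)" using degr degB by simp
    then have "degree A + degree r \<le> 2*k-2" using degA j by linarith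
    then have "degree (A * r) \<le> 2*k-2" using degree_mult_le[of A r] by linarith
    then show ?thesis unfolding p_def
      by (metis degree_add_le degree_1 zero_le)
  qed
  have Bdvd: "B dvd p"
  proof -
    have "(-u) mod B = -u - ((-u) div B) * B" by (rule minus_div_mult_eq_mod[symmetric])
    then have "p = B * (v - A * ((-u) div B))"
      unfolding p_def r_def
    proof -
      have "1 + A * (- u - (-u) div B * B) = (u * A + v * B) - A * u - A * ((-u) div B) * B" using uv by (simp add: algebra_simps)
      also have "\<dots> = B * (v - A * ((-u) div B))" by (simp add: algebra_simps)
      finally show "1 + A * ((-u) mod B) = B * (v - A * ((-u) div B))" using \<open>(-u) mod B = -u - ((-u) div B) * B\<close> by simp
    qed
    then show ?thesis by simp
  qed
  have fin: "finite {1..<j}" "finite {j<..k}" by simp_all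
  have sqA: "[:-t i,1:]^2 dvd A" if "i \<in> {1..<j}" for i
    unfolding A_def using dvd_prodI[OF fin(1) that, of "\<lambda>i. [:-t i,1:]^2"] by (rule dvd_mult)
  have sqB: "[:-t i,1:]^2 dvd B" if "i \<in> {j<..k}" for i
    unfolding B_def using dvd_prodI[OF fin(2) that, of "\<lambda>i. [:-t i,1:]^2"] by simp
  have linA: "[:-t i,1:] dvd A" if "i \<in> {1..j}" for i
  proof (cases "i = j")
    case True then show ?thesis unfolding A_def by (metis dvd_triv_left)
  next
    case False
    then have "i \<in> {1..<j}" using that by auto
    then have "[:-t i,1:]^2 dvd A" by (rule sqA)
    moreover have "[:-t i,1:] dvd [:-t i,1:]^2" by simp
    ultimately show ?thesis using dvd_trans by blast
  qed
  have pm1: "p - 1 = A * r" by (simp add: p_def)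
  have vals: "poly p (t i) = (if i \<le> j then 1 else 0)" if "i \<in> {1..k}" for i
  proof (cases "i \<le> j")
    case True
    then have "poly A (t i) = 0" using linA[of i] that by (simp add: poly_eq_0_iff_dvd)
    then show ?thesis using True by (simp add: p_def)
  next
    case False
    then have "i \<in> {j<..k}" using that by auto
    then have "poly B (t i) = 0" using sqB[of i] 
      by (metis dvd_trans poly_eq_0_iff_dvd power2_eq_square dvd_triv_left)
    then show ?thesis using False Bdvd by (auto simp: poly_eq_0_iff_dvd dvd_trans elim!: dvdE)
  qed
  have ders: "poly (pderiv p) (t i) = 0" if "i \<in> {1..k}" "i \<noteq> j" for i
  proof (cases "i < j")
    case True
    then have "[:-t i,1:]^2 dvd p - 1" using sqA[of i] that pm1 by (auto intro: dvd_mult2)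
    then have "poly (pderiv (p - 1)) (t i) = 0" using sq_dvd_root_deriv by blast
    then show ?thesis by (simp add: pderiv_diff)
  next
    case False
    then have "i \<in> {j<..k}" using that by auto
    then have "[:-t i,1:]^2 dvd p" using sqB Bdvd dvd_trans by blast
    then show ?thesis using sq_dvd_root_deriv by blast
  qed
  show ?thesis using degp vals ders by blast
qed



lemma mono_le_aux:
  fixes t :: "nat \<Rightarrow> real"
  assumes mono: "\<forall>i i'. 1 \<le> i \<longrightarrow> i < i' \<longrightarrow> i' \<le> k \<longrightarrow> t i < t i'"
    and "1 \<le> a" "a \<le> b" "b \<le> k"
  shows "t a \<le> t b"
  using assms by (cases "a = b") (auto simp: less_le_not_le intro: less_imp_le)

lemma locate:
  fixes t :: "nat \<Rightarrow> real"
  assumes "t 1 \<le> x" "x < t k" "1 \<le> k"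
  shows "\<exists>i\<in>{1..<k}. t i \<le> x \<and> x < t (Suc i)"
proof -
  define I where "I = {i\<in>{1..<k}. t i \<le> x}"
  have "1 \<in> I" using assms by (auto simp: I_def) (metis less_le_not_le nat_less_le not_less)
  then have ne: "I \<noteq> {}" and fin: "finite I" by (auto simp: I_def)
  define i where "i = Max I"
  have iI: "i \<in> I" using Max_in[OF fin ne] by (simp add: i_def)
  have "x < t (Suc i)"
  proof (cases "Suc i = k")
    case True then show ?thesis using assms by simp
  next
    case False
    then have "Suc i \<in> {1..<k}" using iI by (auto simp: I_def)
    moreover have "Suc i \<notin> I" using Max_ge[OF fin, of "Suc i"] by (auto simp: i_def)
    ultimately show ?thesis by (auto simp: I_def)
  qed
  then show ?thesis using iI by (auto simp: I_def)
qed



lemma majorant_sign: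
  fixes t :: "nat \<Rightarrow> real" and p :: "real poly"
  assumes mono: "\<forall>i i'. 1 \<le> i \<longrightarrow> i < i' \<longrightarrow> i' \<le> k \<longrightarrow> t i < t i'"
    and j: "1 \<le> j" "j < k"
    and degp: "degree p \<le> 2*k-2"
    and vals: "\<forall>i\<in>{1..k}. poly p (t i) = (if i \<le> j then 1 else 0)"
    and ders: "\<forall>i\<in>{1..k}. i \<noteq> j \<longrightarrow> poly (pderiv p) (t i) = 0"
  shows "(\<forall>x. 0 \<le> poly p x) \<and> (\<forall>x. x \<le> t j \<longrightarrow> 1 \<le> poly p x)"
proof -
  have mle: "t a \<le> t b" if "1 \<le> a" "a \<le> b" "b \<le> k" for a b
    using mono_le_aux[OF mono that] .
  have mlt: "t a < t b" if "1 \<le> a" "a < b" "b \<le> k" for a b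
    using mono that by blast
  define S where "S = {1..<k} - {j}"
  define T where "T = {1..k} - {j}"
  have rolle: "\<exists>z. t i < z \<and> z < t (Suc i) \<and> poly (pderiv p) z = 0" if "i \<in> S" for i
  proof -
    have i: "1 \<le> i" "i < k" "i \<noteq> j" using that by (auto simp: S_def)
    have "poly p (t i) = poly p (t (Suc i))" using vals i by auto
    moreover have "t i < t (Suc i)" using mlt i by auto
    ultimately show ?thesis using poly_MVT[of "t i" "t (Suc i)" p] by auto
  qed
  obtain \<xi> where xi: "\<And>i. i \<in> S \<Longrightarrow> t i < \<xi> i \<and> \<xi> i < t (Suc i) \<and> poly (pderiv p) (\<xi> i) = 0"
    using rolle by metis
  define Z where "Z = t ` T \<union> \<xi> ` S"
  have finZ: "finite Z" by (simp add: Z_def S_def T_def)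
  have injt: "inj_on t T"
  proof (rule linorder_inj_onI)
    fix a b assume "a < b" "a \<in> T" "b \<in> T"
    then have "t a < t b" using mlt by (auto simp: T_def)
    then show "t a \<noteq> t b" by simp
  qed auto
  have injxi: "inj_on \<xi> S"
  proof (rule linorder_inj_onI)
    fix a b assume ab: "a < b" "a \<in> S" "b \<in> S"
    have "\<xi> a < t (Suc a)" using xi ab by blast
    also have "t (Suc a) \<le> t b" using ab by (intro mle) (auto simp: S_def)
    also have "t b < \<xi> b" using xi ab by blast
    finally show "\<xi> a \<noteq> \<xi> b" by simp
  qed auto
  have disj: "t ` T \<inter> \<xi> ` S = {}"
  proof (rule ccontr)
    assume "t ` T \<inter> \<xi> ` S \<noteq> {}"
    then obtain a b where ab: "a \<in> T" "b \<in> S" "t a = \<xi> b" by blast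
    show False
    proof (cases "a \<le> b")
      case True
      then have "t a \<le> t b" using ab by (intro mle) (auto simp: S_def T_def)
      then show False using xi[OF ab(2)] ab by simp
    next
      case False
      then have "t (Suc b) \<le> t a" using ab by (intro mle) (auto simp: S_def T_def)
      then show False using xi[OF ab(2)] ab by simp
    qed
  qed
  have cardT: "card T = k - 1" using j by (simp add: T_def)
  have cardS: "card S = k - 2" using j by (simp add: S_def)
  have cardZ: "card Z = 2*k - 3"
    unfolding Z_def using card_Un_disjoint[of "t ` T" "\<xi> ` S"] disj card_image[OF injt] card_image[OF injxi]
      cardT cardS j by (simp add: S_def T_def)
  have rootsZ: "\<forall>z\<in>Z. poly (pderiv p) z = 0"
    unfolding Z_def T_def using xi ders by blast
  define Q where "Q = (\<Prod>z\<in>Z. [:-z,1:])"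
  have Qdvd: "Q dvd pderiv p" unfolding Q_def by (rule prod_roots_dvd[OF finZ rootsZ])
  have p'nz: "pderiv p \<noteq> 0"
  proof
    assume "pderiv p = 0"
    then obtain h where "p = [:h:]" using pderiv_iszero by blast
    moreover have "poly p (t j) = 1" "poly p (t (Suc j)) = 0" using vals j by auto
    ultimately show False by simp
  qed
  obtain r where r: "pderiv p = Q * r" using Qdvd by blast
  have Qnz: "Q \<noteq> 0" unfolding Q_def using finZ by simp
  have rnz: "r \<noteq> 0" using r p'nz by auto
  have degQ: "degree Q = card Z" unfolding Q_def
    by (subst degree_prod_sum_eq) auto
  have "degree (pderiv p) = degree Q + degree r" using r Qnz rnz by (simp add: degree_mult_eq)
  moreover have "degree (pderiv p) \<le> 2*k-3" using degp by (simp add: degree_pderiv)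
  ultimately have "degree r = 0" using degQ cardZ by simp
  then obtain c where c: "r = [:c:]" by (rule degree_eq_zeroE)
  define N where "N x = card {z\<in>Z. x < z}" for x
  define P where "P x = (\<Prod>z\<in>Z. \<bar>x - z\<bar>)" for x
  have Pnn: "0 \<le> P x" for x unfolding P_def by (rule prod_nonneg) simp
  have der: "poly (pderiv p) x = c * (-1)^(N x) * P x" for x
    using prod_sign[OF finZ, of x] by (simp add: r c Q_def poly_prod N_def P_def)
  have Ncard: "N x = card {i\<in>T. x < t i} + card {i\<in>S. x < \<xi> i}" for x
  proof -
    have "{z\<in>Z. x < z} = t ` {i\<in>T. x < t i} \<union> \<xi> ` {i\<in>S. x < \<xi> i}" by (auto simp: Z_def)
    moreover have "card (t ` {i\<in>T. x < t i}) = card {i\<in>T. x < t i}"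
      by (rule card_image) (rule inj_on_subset[OF injt], auto)
    moreover have "card (\<xi> ` {i\<in>S. x < \<xi> i}) = card {i\<in>S. x < \<xi> i}"
      by (rule card_image) (rule inj_on_subset[OF injxi], auto)
    moreover have "t ` {i\<in>T. x < t i} \<inter> \<xi> ` {i\<in>S. x < \<xi> i} = {}" using disj by auto
    ultimately show ?thesis unfolding N_def
      by (simp add: card_Un_disjoint S_def T_def)
  qed
  have Nmid: "odd (N x) \<longleftrightarrow> \<not> (i \<in> S \<and> x < \<xi> i)"
    if i: "1 \<le> i" "i < k" "t i < x" "x < t (Suc i)" for i x
  proof -
    have s1: "{i'\<in>T. x < t i'} = {Suc i..k} - {j}"
    proof (intro set_eqI iffI)
      fix i' assume "i' \<in> {i'\<in>T. x < t i'}"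
      then have "i' \<in> T" "x < t i'" by auto
      moreover have "Suc i \<le> i'"
      proof (rule ccontr)
        assume "\<not> Suc i \<le> i'"
        then have "t i' \<le> t i" using \<open>i' \<in> T\<close> i by (intro mle) (auto simp: T_def)
        then show False using \<open>x < t i'\<close> i by simp
      qed
      ultimately show "i' \<in> {Suc i..k} - {j}" by (auto simp: T_def)
    next
      fix i' assume a: "i' \<in> {Suc i..k} - {j}"
      then have "t (Suc i) \<le> t i'" by (intro mle) auto
      then show "i' \<in> {i'\<in>T. x < t i'}" using a i by (auto simp: T_def)
    qed
    define e where "e = (if i < j then 1 else 0 :: nat)"
    define f where "f = (if i \<in> S \<and> x < \<xi> i then 1 else 0 :: nat)"
    have s2: "{i'\<in>S. x < \<xi> i'} = ({Suc i..<k} - {j}) \<union> (if i \<in> S \<and> x < \<xi> i then {i} else {})"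
    proof (intro set_eqI iffI)
      fix i' assume "i' \<in> {i'\<in>S. x < \<xi> i'}"
      then have a: "i' \<in> S" "x < \<xi> i'" by auto
      have "\<not> i' < i"
      proof
        assume "i' < i"
        then have "t (Suc i') \<le> t i" using a i by (intro mle) (auto simp: S_def)
        then show False using xi[OF a(1)] a i by simp
      qed
      then show "i' \<in> ({Suc i..<k} - {j}) \<union> (if i \<in> S \<and> x < \<xi> i then {i} else {})"
        using a by (cases "i' = i") (auto simp: S_def)
    next
      fix i' assume a: "i' \<in> ({Suc i..<k} - {j}) \<union> (if i \<in> S \<and> x < \<xi> i then {i} else {})"
      show "i' \<in> {i'\<in>S. x < \<xi> i'}"
      proof (cases "i' \<in> {Suc i..<k} - {j}")
        case True
        then have "i' \<in> S" using i by (auto simp: S_def)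
        moreover have "t (Suc i) \<le> t i'" using True by (intro mle) auto
        ultimately show ?thesis using xi[of i'] i by force
      next
        case False
        then show ?thesis using a by (auto split: if_splits)
      qed
    qed
    have c1: "card {i'\<in>T. x < t i'} = (k - i) - e"
      unfolding s1 e_def using j i by (auto simp: card_Diff_singleton_if)
    have c2: "card {i'\<in>S. x < \<xi> i'} = ((k - Suc i) - e) + f"
      unfolding s2 e_def f_def using j i by (auto simp: card_Diff_singleton_if)
    have ke: "k - i \<ge> 1 + e" using i j by (auto simp: e_def)
    have "N x = 2 * (k - i - e) - 1 + f" using Ncard[of x] c1 c2 ke by simp
    moreover have "k - i - e \<ge> 1" using ke by simp
    ultimately have "odd (N x) \<longleftrightarrow> f = 0" by (auto simp: f_def)
    then show ?thesis by (simp add: f_def)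
  qed
  have Nleft: "odd (N x)" if "x < t 1" for x
  proof -
    have "{i'\<in>T. x < t i'} = T"
    proof -
      have "t 1 \<le> t i'" if "i' \<in> T" for i' using that by (intro mle) (auto simp: T_def)
      then show ?thesis using \<open>x < t 1\<close> by force
    qed
    moreover have "{i'\<in>S. x < \<xi> i'} = S"
    proof -
      have "t 1 \<le> t i'" if "i' \<in> S" for i' using that by (intro mle) (auto simp: S_def)
      then show ?thesis using \<open>x < t 1\<close> xi by force
    qed
    ultimately have "N x = (k - 1) + (k - 2)" using Ncard[of x] cardT cardS by simp
    then show ?thesis using j by presburger
  qed
  have Nright: "N x = 0" if "t k < x" for x
  proof -
    have "{i'\<in>T. x < t i'} = {}"
    proof -
      have "t i' \<le> t k" if "i' \<in> T" for i' using that by (intro mle) (auto simp: T_def)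
      then show ?thesis using \<open>t k < x\<close> by force
    qed
    moreover have "{i'\<in>S. x < \<xi> i'} = {}"
    proof -
      have "t (Suc i') \<le> t k" if "i' \<in> S" for i' using that by (intro mle) (auto simp: S_def)
      then show ?thesis using \<open>t k < x\<close> xi by force
    qed
    ultimately show ?thesis using Ncard[of x] by (simp only: card.empty add_0)
  qed
  have cpos: "c > 0"
  proof -
    have tj: "t j < t (Suc j)" using mlt j by auto
    obtain y where y: "t j < y" "y < t (Suc j)"
      "poly p (t (Suc j)) - poly p (t j) = (t (Suc j) - t j) * poly (pderiv p) y"
      using poly_MVT[OF tj] by blast
    have "poly p (t (Suc j)) - poly p (t j) = -1" using vals j by auto
    then have "(t (Suc j) - t j) * poly (pderiv p) y < 0" using y(3) by simp
    then have "poly (pderiv p) y < 0" using tj by (simp add: mult_less_0_iff)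
    moreover have "odd (N y)" using Nmid[of j y] j y by (auto simp: S_def)
    ultimately have "c * P y > 0" using der[of y] by simp
    then show ?thesis using Pnn[of y] by (metis mult_nonpos_nonneg not_less)
  qed
  have pos: "poly (pderiv p) x \<ge> 0" if "even (N x)" for x
    using der[of x] that cpos Pnn[of x] by simp
  have neg: "poly (pderiv p) x \<le> 0" if "odd (N x)" for x
    using der[of x] that cpos Pnn[of x] by (simp add: mult_nonneg_nonneg)
  have incr: "poly p a \<le> poly p b" if ab: "a < b" and hz: "\<And>z. a < z \<Longrightarrow> z < b \<Longrightarrow> poly (pderiv p) z \<ge> 0" for a b
  proof -
    obtain z where "a < z" "z < b" "poly p b - poly p a = (b - a) * poly (pderiv p) z"
      using poly_MVT[OF ab] by blast
    then show ?thesis using hz[of z] ab by (metis diff_ge_0_iff_ge less_eq_real_def mult_nonneg_nonneg)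
  qed
  have decr: "poly p b \<le> poly p a" if ab: "a < b" and hz: "\<And>z. a < z \<Longrightarrow> z < b \<Longrightarrow> poly (pderiv p) z \<le> 0" for a b
  proof -
    obtain z where "a < z" "z < b" "poly p b - poly p a = (b - a) * poly (pderiv p) z"
      using poly_MVT[OF ab] by blast
    then show ?thesis using hz[of z] ab by (metis diff_le_0_iff_le less_eq_real_def mult_nonneg_nonpos diff_gt_0_iff_gt)
  qed
  have vals01: "poly p (t i) \<ge> 0" if "i \<in> {1..k}" for i using vals that by simp
  have main: "0 \<le> poly p x \<and> (x \<le> t j \<longrightarrow> 1 \<le> poly p x)" for x
  proof -
    have tjk: "t j < t k" using mlt j by auto
    consider "x < t 1" | "t k \<le> x" | "t 1 \<le> x" "x < t k" by linarith
    then show ?thesis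
    proof cases
      case 1
      then have "poly p (t 1) \<le> poly p x"
        by (intro decr) (auto intro!: neg Nleft)
      moreover have "poly p (t 1) = 1" using vals j by auto
      ultimately show ?thesis by simp
    next
      case 2
      have "poly p (t k) = 0" using vals j by auto
      moreover have "x = t k \<or> poly p (t k) \<le> poly p x"
        using 2 by (auto intro!: incr pos simp: Nright)
      ultimately show ?thesis using 2 tjk by auto
    next
      case 3
      then obtain i where i: "i \<in> {1..<k}" "t i \<le> x" "x < t (Suc i)"
        using locate[of t x k] j by auto
      have i1: "1 \<le> i" "i < k" using i by auto
      have ge: "poly p (t i) \<le> poly p x \<or> poly p (t (Suc i)) \<le> poly p x"
      proof (cases "i \<in> S \<and> x \<le> \<xi> i")
        case True
        show ?thesis
        proof (cases "x = t i")
          case False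
          then have "t i < x" using i by simp
          then have "poly p (t i) \<le> poly p x"
            by (intro incr pos) (use Nmid[OF i1] True i in auto)
          then show ?thesis by simp
        qed simp
      next
        case False
        have "poly p (t (Suc i)) \<le> poly p x"
        proof (intro decr neg)
          fix z assume z: "x < z" "z < t (Suc i)"
          then have "t i < z" using i by simp
          then show "odd (N z)" using Nmid[OF i1 \<open>t i < z\<close> z(2)] False z by auto
        qed (use i in simp)
        then show ?thesis by simp
      qed
      have v1: "poly p (t i) \<ge> 0" "poly p (t (Suc i)) \<ge> 0" using vals i1 by auto
      have nn: "0 \<le> poly p x" using ge v1 by linarith
      have "1 \<le> poly p x" if "x \<le> t j"
      proof (cases "x = t j")
        case True then show ?thesis using vals j by auto
      next
        case False
        then have "x < t j" using that by simp
        have "i < j"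
        proof (rule ccontr)
          assume "\<not> i < j"
          then have "t j \<le> t i" using i1 j by (intro mle) auto
          then show False using i \<open>x < t j\<close> by simp
        qed
        then have "poly p (t i) = 1" "poly p (t (Suc i)) = 1" using vals i1 by auto
        then show ?thesis using ge by auto
      qed
      then show ?thesis using nn by blast
    qed
  qed
  show ?thesis using main by blast
qed


lemma majorant:
  fixes t :: "nat \<Rightarrow> real"
  assumes mono: "\<forall>i i'. 1 \<le> i \<longrightarrow> i < i' \<longrightarrow> i' \<le> k \<longrightarrow> t i < t i'"
    and j: "1 \<le> j" "j \<le> k"
  shows "\<exists>p. degree p \<le> 2*k-2 \<and> (\<forall>x. 0 \<le> poly p x) \<and> (\<forall>x. x \<le> t j \<longrightarrow> 1 \<le> poly p x)
           \<and> (\<forall>i\<in>{1..k}. poly p (t i) = (if i \<le> j then 1 else 0))"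
proof (cases "j = k")
  case True
  then show ?thesis by (intro exI[of _ 1]) auto
next
  case False
  then have jk: "j < k" using j by simp
  obtain p where p: "degree p \<le> 2*k-2" "\<forall>i\<in>{1..k}. poly p (t i) = (if i \<le> j then 1 else 0)"
           "\<forall>i\<in>{1..k}. i \<noteq> j \<longrightarrow> poly (pderiv p) (t i) = 0"
    using construct[OF mono j(1) jk] by blast
  show ?thesis using majorant_sign[OF mono j(1) jk p] p by blast
qed

lemma minorant:
  fixes t :: "nat \<Rightarrow> real"
  assumes mono: "\<forall>i i'. 1 \<le> i \<longrightarrow> i < i' \<longrightarrow> i' \<le> k \<longrightarrow> t i < t i'"
    and j: "1 \<le> j" "j \<le> k"
  shows "\<exists>q. degree q \<le> 2*k-2 \<and> (\<forall>x. 0 \<le> poly q x) \<and> (\<forall>x. t j \<le> x \<longrightarrow> 1 \<le> poly q x)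
           \<and> (\<forall>i\<in>{1..k}. poly q (t i) = (if j \<le> i then 1 else 0))"
proof -
  define t' where "t' i = - t (k + 1 - i)" for i
  have mono': "\<forall>i i'. 1 \<le> i \<longrightarrow> i < i' \<longrightarrow> i' \<le> k \<longrightarrow> t' i < t' i'"
  proof (intro allI impI)
    fix i i' assume "1 \<le> i" "i < i'" "i' \<le> k"
    then have "t (k + 1 - i') < t (k + 1 - i)" using mono by auto
    then show "t' i < t' i'" by (simp add: t'_def)
  qed
  obtain p where p: "degree p \<le> 2*k-2" "\<forall>x. 0 \<le> poly p x" "\<forall>x. x \<le> t' (k + 1 - j) \<longrightarrow> 1 \<le> poly p x"
     "\<forall>i\<in>{1..k}. poly p (t' i) = (if i \<le> k + 1 - j then 1 else 0)"
  proof -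
    have "1 \<le> k + 1 - j" "k + 1 - j \<le> k" using j by auto
    from majorant[OF mono' this] show ?thesis using that by blast
  qed
  define q where "q = pcompose p [:0,-1:]"
  have pq: "poly q x = poly p (-x)" for x by (simp add: q_def poly_pcompose)
  have "degree q \<le> 2*k-2" using p(1) by (simp add: q_def degree_pcompose)
  moreover have "\<forall>x. 0 \<le> poly q x" using p(2) pq by simp
  moreover have "\<forall>x. t j \<le> x \<longrightarrow> 1 \<le> poly q x"
    using p(3) pq j by (auto simp: t'_def)
  moreover have "\<forall>i\<in>{1..k}. poly q (t i) = (if j \<le> i then 1 else 0)"
  proof
    fix i assume i: "i \<in> {1..k}"
    have "poly q (t i) = poly p (t' (k + 1 - i))" using pq i by (simp add: t'_def)
    also have "\<dots> = (if k + 1 - i \<le> k + 1 - j then 1 else 0)"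
      using p(4) i by (metis atLeastAtMost_iff diff_le_self le_diff_conv2 add_le_cancel_left add.commute le_add2 add_diff_cancel_left' diff_diff_cancel Nat.le_diff_conv2 le_add1 diff_le_mono2 Suc_eq_plus1 le_SucI)
    also have "\<dots> = (if j \<le> i then 1 else 0)" using i j by auto
    finally show "poly q (t i) = (if j \<le> i then 1 else 0)" .
  qed
  ultimately show ?thesis by blast
qed



lemma sum_if_le:
  fixes d :: "nat \<Rightarrow> real"
  assumes "j \<le> k"
  shows "(\<Sum>i\<in>{1..k}. d i * (if i \<le> j then 1 else 0)) = (\<Sum>i\<in>{1..j}. d i)"
  by (rule sum.mono_neutral_cong_right) (use assms in auto)

theorem corollary2:
  fixes a b :: real and \<mu> :: "real \<Rightarrow> real" and k :: nat
    and \<theta> d :: "nat \<Rightarrow> real"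
  assumes "a < b"
    and "is_distribution_function \<mu>"
    and "\<forall>x y. x < a \<longrightarrow> y < a \<longrightarrow> \<mu> x = \<mu> y"
    and "\<forall>x y. b < x \<longrightarrow> b < y \<longrightarrow> \<mu> x = \<mu> y"
    and "1 \<le> k"
    and "is_GQ k \<mu> \<theta> d"
    and "\<theta> 0 = a" and "\<theta> (k+1) = b" and "d 0 = 0" and "d (k+1) = 0"
  shows "d_KS \<mu> (quad_df k \<theta> d) \<le> Max (d ` {1..k}) \<and>
         d_W \<mu> (quad_df k \<theta> d)
           \<le> ennreal (\<Sum>j\<in>{0..k}. max (d j) (d (j+1)) * (\<theta> (j+1) - \<theta> j))"
proof -
  note ab = assms(1) and cla = assms(3) and clb = assms(4) and k1 = assms(5)
  have monomu: "\<And>x y. x \<le> y \<Longrightarrow> \<mu> x \<le> \<mu> y" and rc: "\<And>x. continuous (at_right x) \<mu>"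
    and lbot: "(\<mu> \<longlongrightarrow> 0) at_bot" and ltop: "(\<mu> \<longlongrightarrow> 1) at_top"
    using assms(2) unfolding is_distribution_function_def mono_def by auto
  define M where "M = interval_measure \<mu>"
  interpret real_distribution M
    unfolding M_def by (rule real_distribution_interval_measure[OF monomu rc lbot ltop])
  have cdfM: "measure M {..x} = \<mu> x" for x
    unfolding M_def by (rule measure_interval_measure_Iic[OF monomu rc lbot])
  have mono: "\<forall>i i'. 1 \<le> i \<longrightarrow> i < i' \<longrightarrow> i' \<le> k \<longrightarrow> \<theta> i < \<theta> i'"
    and dnn: "\<forall>j\<in>{1..k}. 0 \<le> d j"
    and intm: "\<forall>m. m \<le> 2*k - 1 \<longrightarrow> integrable M (\<lambda>x. x ^ m)"
    and exact: "\<forall>p :: real poly. degree p \<le> 2*k - 1 \<longrightarrow>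
        integral\<^sup>L M (poly p) = (\<Sum>j\<in>{1..k}. d j * poly p (\<theta> j))"
    using assms(6) unfolding is_GQ_def M_def by auto
  have intp: "integrable M (poly p)" if "degree p \<le> 2*k-1" for p :: "real poly"
  proof -
    have "integrable M (\<lambda>x. coeff p i * x ^ i)" if "i \<in> {..degree p}" for i
      using intm \<open>degree p \<le> 2*k-1\<close> that by (intro integrable_mult_right) auto
    then have "integrable M (\<lambda>x. \<Sum>i\<in>{..degree p}. coeff p i * x ^ i)"
      using Bochner_Integration.integrable_sum[where I="{..degree p}" and f="\<lambda>i x. coeff p i * x ^ i" and M=M] by blast
    then show ?thesis by (simp add: poly_altdef[abs_def])
  qed
  have total: "(\<Sum>j\<in>{1..k}. d j) = 1"
  proof -
    have "integral\<^sup>L M (poly 1) = (\<Sum>j\<in>{1..k}. d j * poly 1 (\<theta> j))"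
      using exact by (metis degree_1 zero_le)
    moreover have "poly 1 = (\<lambda>x::real. 1::real)" by (simp add: fun_eq_iff)
    moreover have "integral\<^sup>L M (\<lambda>x. 1::real) = 1" using prob_space by simp
    ultimately show ?thesis by simp
  qed
  have intind: "integrable M (indicat_real A)" if "A \<in> sets borel" for A
  proof (rule integrable_real_indicator)
    show "A \<in> sets M" using that by simp
    show "emeasure M A < \<infinity>" by (simp add: emeasure_eq_measure)
  qed
  have upper: "\<mu> (\<theta> j) \<le> (\<Sum>i\<in>{1..j}. d i)" if j: "1 \<le> j" "j \<le> k" for j
  proof -
    obtain p where p: "degree p \<le> 2*k-2" "\<forall>x. 0 \<le> poly p x" "\<forall>x. x \<le> \<theta> j \<longrightarrow> 1 \<le> poly p x"
           "\<forall>i\<in>{1..k}. poly p (\<theta> i) = (if i \<le> j then 1 else 0)"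
      using majorant[OF mono j] by blast
    have dp: "degree p \<le> 2*k-1" using p(1) by simp
    have "\<mu> (\<theta> j) = integral\<^sup>L M (indicator {..\<theta> j})" by (simp add: cdfM)
    also have "\<dots> \<le> integral\<^sup>L M (poly p)"
      by (rule integral_mono) (use intp[OF dp] p intind in \<open>auto split: split_indicator\<close>)
    also have "\<dots> = (\<Sum>i\<in>{1..k}. d i * (if i \<le> j then 1 else 0))"
      using exact dp p(4) by simp
    also have "\<dots> = (\<Sum>i\<in>{1..j}. d i)"
      using j by (intro sum_if_le) simp
    finally show ?thesis .
  qed

  have lower: "(\<Sum>i\<in>{1..j-1}. d i) \<le> measure M {..<\<theta> j}" if j: "1 \<le> j" "j \<le> k" for j
  proof -
    obtain q where q: "degree q \<le> 2*k-2" "\<forall>x. 0 \<le> poly q x" "\<forall>x. \<theta> j \<le> x \<longrightarrow> 1 \<le> poly q x"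
           "\<forall>i\<in>{1..k}. poly q (\<theta> i) = (if j \<le> i then 1 else 0)"
      using minorant[OF mono j] by blast
    have dq: "degree (1 - q) \<le> 2*k-1" using q(1) by (intro degree_diff_le) auto
    have "(\<Sum>i\<in>{1..j-1}. d i) = (\<Sum>i\<in>{1..k}. d i * (if i \<le> j - 1 then 1 else 0))"
      using j by (intro sum_if_le[symmetric]) simp
    also have "\<dots> = (\<Sum>i\<in>{1..k}. d i * poly (1 - q) (\<theta> i))"
      using q(4) j by (intro sum.cong) auto
    also have "\<dots> = integral\<^sup>L M (poly (1 - q))" using exact dq by simp
    also have "\<dots> \<le> integral\<^sup>L M (indicator {..<\<theta> j})"
      by (rule integral_mono) (use intp[OF dq] q intind in \<open>auto split: split_indicator\<close>)
    also have "\<dots> = measure M {..<\<theta> j}" by simp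
    finally show ?thesis .
  qed
  have mle: "\<theta> i \<le> \<theta> i'" if "1 \<le> i" "i \<le> i'" "i' \<le> k" for i i'
    using mono_le_aux[OF mono that] .
  have mlt: "\<theta> i < \<theta> i'" if "1 \<le> i" "i < i'" "i' \<le> k" for i i'
    using mono that by blast
  have mu0: "\<mu> x = 0" if "x < a" for x
  proof -
    have "eventually (\<lambda>y. \<mu> y = \<mu> x) at_bot"
      unfolding eventually_at_bot_linorder using that cla by (intro exI[of _ x]) (meson le_less_trans)
    then have "((\<lambda>y::real. \<mu> x) \<longlongrightarrow> 0) at_bot" by (rule Lim_transform_eventually[OF lbot, of "\<lambda>y. \<mu> x"])
    then show ?thesis by (simp add: tendsto_const_iff)
  qed
  have mu1: "\<mu> x = 1" if "b < x" for x
  proof -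
    have "eventually (\<lambda>y. \<mu> y = \<mu> x) at_top"
      unfolding eventually_at_top_linorder using that clb by (intro exI[of _ x]) (meson less_le_trans)
    then have "((\<lambda>y::real. \<mu> x) \<longlongrightarrow> 1) at_top" by (rule Lim_transform_eventually[OF ltop, of "\<lambda>y. \<mu> x"])
    then show ?thesis by (simp add: tendsto_const_iff)
  qed
  have mub: "\<mu> x = 1" if "b \<le> x" for x
  proof (cases "x = b")
    case True
    have "(\<mu> \<longlongrightarrow> \<mu> b) (at_right b)" using rc[of b] by (simp add: continuous_within)
    moreover have "eventually (\<lambda>y. \<mu> y = 1) (at_right b)"
      using eventually_at_right_less[of b] by eventually_elim (use mu1 in auto)
    ultimately have "((\<lambda>y::real. 1::real) \<longlongrightarrow> \<mu> b) (at_right b)" by (rule Lim_transform_eventually[where g="\<lambda>y. 1"])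
    then show ?thesis using True by (simp add: tendsto_const_iff)
  next
    case False then show ?thesis using mu1 that by simp
  qed
  have suppL: "0 \<le> poly L (\<theta> i)"
    if L: "degree L \<le> 1" "AE x in M. 0 \<le> poly L x" and i: "i \<in> {1..k}" "0 < d i" for L i
  proof -
    define R where "R = (\<Prod>i'\<in>{1..k}-{i}. [:-\<theta> i',1:]^2)"
    define P where "P = L * R"
    have degR: "degree R \<le> 2*(k-1)"
    proof -
      have "degree R = (\<Sum>i'\<in>{1..k}-{i}. degree ([:-\<theta> i',1:]^2))"
        unfolding R_def by (rule degree_prod_sum_eq) simp
      also have "\<dots> = 2*(k-1)" using i by (simp add: degree_linear_power)
      finally show ?thesis by simp
    qed
    have dP: "degree P \<le> 2*k-1"
      using degree_mult_le[of L R] L(1) degR k1 unfolding P_def by linarith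
    have polyR: "poly R x = (\<Prod>i'\<in>{1..k}-{i}. (x - \<theta> i')^2)" for x
      by (simp add: R_def poly_prod)
    have Rnn: "0 \<le> poly R x" for x unfolding polyR by (intro prod_nonneg) simp
    have "0 \<le> integral\<^sup>L M (poly P)"
      by (rule integral_nonneg_AE) (use L(2) in \<open>eventually_elim, simp add: P_def Rnn\<close>)
    also have "\<dots> = (\<Sum>i'\<in>{1..k}. d i' * poly P (\<theta> i'))" using exact dP by simp
    also have "\<dots> = d i * poly P (\<theta> i)"
    proof (rule sum.remove[THEN trans])
      show "finite {1..k}" "i \<in> {1..k}" using i by auto
      have "poly R (\<theta> i') = 0" if "i' \<in> {1..k} - {i}" for i'
        unfolding polyR using that by (subst prod_zero_iff) auto
      then show "d i * poly P (\<theta> i) + (\<Sum>i'\<in>{1..k} - {i}. d i' * poly P (\<theta> i')) = d i * poly P (\<theta> i)"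
        by (simp add: P_def)
    qed
    finally have "0 \<le> d i * (poly L (\<theta> i) * poly R (\<theta> i))" by (simp add: P_def)
    moreover have "0 < poly R (\<theta> i)"
    proof -
      have ne: "\<theta> i' \<noteq> \<theta> i" if "i' \<in> {1..k} - {i}" for i'
      proof (cases "i' < i")
        case True then show ?thesis using mlt[of i' i] that i by auto
      next
        case False then show ?thesis using mlt[of i i'] that i by auto
      qed
      have "0 < (\<theta> i - \<theta> i')^2" if "i' \<in> {1..k} - {i}" for i'
        using ne[OF that] by simp
      then show ?thesis unfolding polyR by (intro prod_pos) blast
    qed
    ultimately have "0 \<le> poly L (\<theta> i) * poly R (\<theta> i)" using i(2) by (simp add: zero_le_mult_iff)
    then show ?thesis using \<open>0 < poly R (\<theta> i)\<close> by (simp add: zero_le_mult_iff)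
  qed
  have sets_M: "sets M = sets borel" by simp
  have suppa: "a \<le> \<theta> i" if i: "i \<in> {1..k}" "0 < d i" for i
  proof (rule ccontr)
    assume "\<not> a \<le> \<theta> i"
    define a' where "a' = (\<theta> i + a) / 2"
    have a': "\<theta> i < a'" "a' < a" using \<open>\<not> a \<le> \<theta> i\<close> by (auto simp: a'_def)
    have "emeasure M {..a'} = 0"
      unfolding M_def by (simp add: emeasure_interval_measure_Iic[OF monomu rc lbot] mu0[OF a'(2)])
    then have "{..a'} \<in> null_sets M" by (intro null_setsI) auto
    then have "AE x in M. x \<notin> {..a'}" by (rule AE_not_in)
    then have "AE x in M. 0 \<le> poly [:-a',1:] x" by eventually_elim auto
    then have "0 \<le> poly [:-a',1:] (\<theta> i)" by (intro suppL i) simp_all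
    then show False using a' by simp
  qed
  have suppb: "\<theta> i \<le> b" if i: "i \<in> {1..k}" "0 < d i" for i
  proof (rule ccontr)
    assume "\<not> \<theta> i \<le> b"
    define b' where "b' = (\<theta> i + b) / 2"
    have b': "b' < \<theta> i" "b < b'" using \<open>\<not> \<theta> i \<le> b\<close> by (auto simp: b'_def)
    have "measure M (space M - {..b'}) = 1 - measure M {..b'}" by (rule prob_compl) simp
    moreover have "space M - {..b'} = {b'<..}" by auto
    ultimately have "measure M {b'<..} = 0" using cdfM[of b'] mu1[OF b'(2)] by simp
    then have "emeasure M {b'<..} = 0" by (simp add: emeasure_eq_measure)
    then have "{b'<..} \<in> null_sets M" by (intro null_setsI) auto
    then have "AE x in M. x \<notin> {b'<..}" by (rule AE_not_in)
    then have "AE x in M. 0 \<le> poly [:b',-1:] x" by eventually_elim auto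
    then have "0 \<le> poly [:b',-1:] (\<theta> i)" by (intro suppL i) simp_all
    then show False using b' by simp
  qed

  have dnn0: "0 \<le> d j" if "j \<le> Suc k" for j
    using dnn that assms(9,10) by (cases "j = 0"; cases "j = Suc k") auto
  have locj: "\<exists>j\<le>k. (1 \<le> j \<longrightarrow> \<theta> j \<le> x) \<and> (j < k \<longrightarrow> x < \<theta> (Suc j)) \<and> (\<forall>i\<in>{1..k}. \<theta> i \<le> x \<longleftrightarrow> i \<le> j)" for x
  proof -
    consider "x < \<theta> 1" | "\<theta> k \<le> x" | "\<theta> 1 \<le> x" "x < \<theta> k" by linarith
    then show ?thesis
    proof cases
      case 1
      have "\<not> \<theta> i \<le> x" if "i \<in> {1..k}" for i using mle[of 1 i] that 1 by auto
      then show ?thesis using 1 k1 by (intro exI[of _ 0]) auto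
    next
      case 2
      have "\<theta> i \<le> x" if "i \<in> {1..k}" for i using mle[of i k] that 2 by auto
      then show ?thesis using 2 k1 by (intro exI[of _ k]) auto
    next
      case 3
      then obtain i where i: "i \<in> {1..<k}" "\<theta> i \<le> x" "x < \<theta> (Suc i)"
        using locate[of \<theta> x k] k1 by auto
      have "\<theta> i' \<le> x \<longleftrightarrow> i' \<le> i" if "i' \<in> {1..k}" for i'
      proof
        assume "\<theta> i' \<le> x"
        show "i' \<le> i"
        proof (rule ccontr)
          assume "\<not> i' \<le> i"
          then have "\<theta> (Suc i) \<le> \<theta> i'" using that by (intro mle) auto
          then show False using i \<open>\<theta> i' \<le> x\<close> by simp
        qed
      next
        assume "i' \<le> i"
        then have "\<theta> i' \<le> \<theta> i" using that i by (intro mle) auto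
        then show "\<theta> i' \<le> x" using i by simp
      qed
      then show ?thesis using i by (intro exI[of _ i]) auto
    qed
  qed
  have Gval: "quad_df k \<theta> d x = (\<Sum>i\<in>{1..j}. d i)"
    if j: "j \<le> k" "\<forall>i\<in>{1..k}. \<theta> i \<le> x \<longleftrightarrow> i \<le> j" for x j
  proof -
    have "quad_df k \<theta> d x = (\<Sum>i\<in>{1..k}. d i * (if i \<le> j then 1 else 0))"
      unfolding quad_df_def using j(2) by (intro sum.cong) auto
    also have "\<dots> = (\<Sum>i\<in>{1..j}. d i)" using j(1) by (rule sum_if_le)
    finally show ?thesis .
  qed
  have pw: "\<bar>\<mu> x - quad_df k \<theta> d x\<bar> \<le> max (d j) (d (Suc j))"
    if j: "j \<le> k" "1 \<le> j \<longrightarrow> \<theta> j \<le> x" "j < k \<longrightarrow> x < \<theta> (Suc j)" "\<forall>i\<in>{1..k}. \<theta> i \<le> x \<longleftrightarrow> i \<le> j" for x j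
  proof -
    have G: "quad_df k \<theta> d x = (\<Sum>i\<in>{1..j}. d i)" using Gval j(1,4) by blast
    have up: "\<mu> x \<le> (\<Sum>i\<in>{1..j}. d i) + d (Suc j)"
    proof (cases "j < k")
      case True
      have "\<mu> x \<le> \<mu> (\<theta> (Suc j))" using j(3) True by (intro monomu) simp
      also have "\<dots> \<le> (\<Sum>i\<in>{1..Suc j}. d i)" using True by (intro upper) auto
      also have "\<dots> = (\<Sum>i\<in>{1..j}. d i) + d (Suc j)" by simp
      finally show ?thesis .
    next
      case False
      then have "j = k" using j by simp
      have "\<mu> x \<le> 1" using cdfM[of x] prob_le_1[of "{..x}"] by simp
      then show ?thesis using \<open>j = k\<close> total assms(10) by simp
    qed
    have low: "(\<Sum>i\<in>{1..j}. d i) - d j \<le> \<mu> x"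
    proof (cases "j = 0")
      case True
      then show ?thesis using assms(9) cdfM[of x] by (metis measure_nonneg atLeastAtMost_iff diff_zero empty_iff le_zero_eq not_one_le_zero sum.neutral)
    next
      case False
      then obtain j' where j': "j = Suc j'" by (cases j) auto
      have "(\<Sum>i\<in>{1..j}. d i) - d j = (\<Sum>i\<in>{1..j-1}. d i)" using j' by simp
      also have "\<dots> \<le> measure M {..<\<theta> j}" using False j by (intro lower) auto
      also have "\<dots> \<le> measure M {..x}" using j(2) False by (intro finite_measure_mono) auto
      also have "\<dots> = \<mu> x" by (rule cdfM)
      finally show ?thesis .
    qed
    show ?thesis using up low G by simp
  qed
  have dMx: "d i \<le> Max (d ` {1..k})" if "i \<le> Suc k" for i
  proof (cases "i \<in> {1..k}")
    case True then show ?thesis by (intro Max_ge) auto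
  next
    case False
    then have "i = 0 \<or> i = Suc k" using that by auto
    then have "d i = 0" using assms(9,10) by auto
    moreover have "d 1 \<le> Max (d ` {1..k})" using k1 by (intro Max_ge) auto
    moreover have "0 \<le> d 1" using dnn k1 by auto
    ultimately show ?thesis by linarith
  qed
  have KS: "d_KS \<mu> (quad_df k \<theta> d) \<le> Max (d ` {1..k})"
    unfolding d_KS_def
  proof (rule cSUP_least)
    fix x
    obtain j where j: "j \<le> k" "1 \<le> j \<longrightarrow> \<theta> j \<le> x" "j < k \<longrightarrow> x < \<theta> (Suc j)" "\<forall>i\<in>{1..k}. \<theta> i \<le> x \<longleftrightarrow> i \<le> j"
      using locj[of x] by blast
    have "\<bar>\<mu> x - quad_df k \<theta> d x\<bar> \<le> max (d j) (d (Suc j))" using pw j by blast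
    also have "\<dots> \<le> Max (d ` {1..k})" using dMx j(1) by simp
    finally show "\<bar>\<mu> x - quad_df k \<theta> d x\<bar> \<le> Max (d ` {1..k})" .
  qed simp
  define c where "c j = max (d j) (d (Suc j))" for j
  define h where "h x = (\<Sum>j\<in>{0..k}. c j * indicator {\<theta> j..<\<theta> (Suc j)} x)" for x
  have cnn: "0 \<le> c j" if "j \<le> k" for j unfolding c_def using dnn0[of j] that by simp
  have hnn: "0 \<le> h x" for x unfolding h_def by (intro sum_nonneg) (simp add: cnn)
  have hb: "\<bar>\<mu> x - quad_df k \<theta> d x\<bar> \<le> h x" for x
  proof -
    consider "x < a" | "b \<le> x" | "a \<le> x" "x < b" by linarith
    then show ?thesis
    proof cases
      case 1
      have "quad_df k \<theta> d x = 0" unfolding quad_df_def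
      proof (intro sum.neutral ballI)
        fix i assume i: "i \<in> {1..k}"
        show "d i * (if \<theta> i \<le> x then 1 else 0) = 0"
        proof (cases "\<theta> i \<le> x")
          case True
          then have "\<not> 0 < d i" using suppa[OF i] 1 by fastforce
          moreover have "0 \<le> d i" using dnn i by blast
          ultimately show ?thesis by simp
        qed simp
      qed
      then show ?thesis using mu0[OF 1] hnn by simp
    next
      case 2
      have "quad_df k \<theta> d x = (\<Sum>i\<in>{1..k}. d i)" unfolding quad_df_def
      proof (intro sum.cong refl)
        fix i assume i: "i \<in> {1..k}"
        show "d i * (if \<theta> i \<le> x then 1 else 0) = d i"
        proof (cases "\<theta> i \<le> x")
          case False
          then have "\<not> 0 < d i" using suppb[OF i] 2 by fastforce
          moreover have "0 \<le> d i" using dnn i by blast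
          ultimately show ?thesis by simp
        qed simp
      qed
      then show ?thesis using mub[OF 2] hnn total by simp
    next
      case 3
      obtain j where j: "j \<le> k" "1 \<le> j \<longrightarrow> \<theta> j \<le> x" "j < k \<longrightarrow> x < \<theta> (Suc j)" "\<forall>i\<in>{1..k}. \<theta> i \<le> x \<longleftrightarrow> i \<le> j"
        using locj[of x] by blast
      have "\<theta> j \<le> x" using j(2) 3 assms(7) by (cases "j = 0") auto
      moreover have "x < \<theta> (Suc j)" using j(1,3) 3 assms(8) by (cases "j = k") auto
      ultimately have ind: "indicator {\<theta> j..<\<theta> (Suc j)} x = (1::real)" by simp
      have "\<bar>\<mu> x - quad_df k \<theta> d x\<bar> \<le> c j" using pw[OF j] by (simp add: c_def)
      also have "\<dots> = c j * indicator {\<theta> j..<\<theta> (Suc j)} x" using ind by simp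
      also have "\<dots> \<le> h x" unfolding h_def
        by (rule member_le_sum) (use j(1) cnn in auto)
      finally show ?thesis .
    qed
  qed
  have cz: "c j * (\<theta> (Suc j) - \<theta> j) \<ge> 0 \<and>
      ennreal (c j) * emeasure lborel {\<theta> j..<\<theta> (Suc j)} = ennreal (c j * (\<theta> (Suc j) - \<theta> j))"
    if j: "j \<in> {0..k}" for j
  proof (cases "\<theta> j \<le> \<theta> (Suc j)")
    case True
    then show ?thesis using cnn[of j] j by (simp add: ennreal_mult)
  next
    case False
    have "c j = 0"
    proof (cases "j = 0")
      case True
      then have "\<theta> 1 < a" using False assms(7) by simp
      then have "\<not> 0 < d 1" using suppa[of 1] k1 by fastforce
      then show ?thesis using True dnn k1 assms(9) by (force simp: c_def)
    next
      case j0: False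
      show ?thesis
      proof (cases "j = k")
        case True
        then have "b < \<theta> k" using False assms(8) by simp
        then have "\<not> 0 < d k" using suppb[of k] k1 by fastforce
        then show ?thesis using True dnn k1 assms(10) by (force simp: c_def)
      next
        case False
        then have "\<theta> j < \<theta> (Suc j)" using j j0 by (intro mlt) auto
        then show ?thesis using \<open>\<not> \<theta> j \<le> \<theta> (Suc j)\<close> by simp
      qed
    qed
    then show ?thesis by simp
  qed
  have "d_W \<mu> (quad_df k \<theta> d) \<le> (\<integral>\<^sup>+ x. ennreal (h x) \<partial>lborel)"
    unfolding d_W_def by (intro nn_integral_mono ennreal_leI hb)
  also have "\<dots> = (\<integral>\<^sup>+ x. (\<Sum>j\<in>{0..k}. ennreal (c j) * indicator {\<theta> j..<\<theta> (Suc j)} x) \<partial>lborel)"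
  proof (intro nn_integral_cong)
    fix x
    have "ennreal (h x) = (\<Sum>j\<in>{0..k}. ennreal (c j * indicator {\<theta> j..<\<theta> (Suc j)} x))"
      unfolding h_def by (rule sum_ennreal[symmetric]) (simp add: cnn)
    also have "\<dots> = (\<Sum>j\<in>{0..k}. ennreal (c j) * indicator {\<theta> j..<\<theta> (Suc j)} x)"
      by (intro sum.cong refl) (simp add: ennreal_mult' cnn ennreal_indicator)
    finally show "ennreal (h x) = (\<Sum>j\<in>{0..k}. ennreal (c j) * indicator {\<theta> j..<\<theta> (Suc j)} x)" .
  qed
  also have "\<dots> = (\<Sum>j\<in>{0..k}. ennreal (c j) * emeasure lborel {\<theta> j..<\<theta> (Suc j)})"
    by (subst nn_integral_sum) (simp_all add: nn_integral_cmult_indicator)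
  also have "\<dots> = (\<Sum>j\<in>{0..k}. ennreal (c j * (\<theta> (Suc j) - \<theta> j)))"
    using cz by (intro sum.cong) auto
  also have "\<dots> = ennreal (\<Sum>j\<in>{0..k}. c j * (\<theta> (Suc j) - \<theta> j))"
    using cz by (intro sum_ennreal) auto
  finally have W: "d_W \<mu> (quad_df k \<theta> d) \<le> ennreal (\<Sum>j\<in>{0..k}. c j * (\<theta> (Suc j) - \<theta> j))" .
  show ?thesis using KS W by (simp add: c_def)
qed

end
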